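(* Let $\mathcal S=(s_\alpha)_{\alpha\in L(\omega_1)}$ be a ladder system on $\omega_1$ and let $K_{\mathcal S}=\omega_1\cup\{\infty\}$ be the associated ladder system space. Let $\phi:K_{\mathcal S}\to K_{\mathcal S}$ be a continuous map with $\phi(\infty)=\infty$. Then there exists a closed unbounded set $F\subset\omega_1$ such that for every $\alpha\in F$, either $\phi(\alpha)=\alpha$ or $\phi(\alpha)=\infty$.
   Context: $L(\omega_1)$ denotes the set of limit ordinals in $\omega_1$ (the first uncountable ordinal) and $S(\omega_1)=\omega_1\setminus L(\omega_1)$. A ladder system on $\omega_1$ is a family $\mathcal S=(s_\alpha)_{\alpha\in L(\omega_1)}$ where for each limit $\alpha$, $s_\alpha=\{s^n_\alpha:n\in\omega\}$ and $(s^n_\alpha)_{n\in\omega}$ is a strictly increasing sequence in $S(\omega_1)$ converging (in the order sense) to $\alpha$. The ladder system topology $\tau_{\mathcal S}$ on $\omega_1$ is the topology in which every element of $S(\omega_1)$ is isolated and the basic neighborhoods of a limit ordinal $\alpha$ are the sets $\{\alpha\}\cup B$ with $B$ a cofinite subset of $s_\alpha$. This is a locally compact Hausdorff space, and $K_{\mathcal S}=\omega_1\cup\{\infty\}$ is its one-point compactification. "Club" means closed (in the order topology) and unbounded in $\omega_1$. *)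

theory Defs
  imports "HOL-Analysis.Analysis"
begin

(* omega_1 is modelled by a wellorder type 'a that is uncountable and all of whose
   proper initial segments are countable (this characterises omega_1 up to order isomorphism). *)
definition is_omega1_type :: "'a::wellorder itself \<Rightarrow> bool" where
  "is_omega1_type _ \<longleftrightarrow> uncountable (UNIV :: 'a set) \<and> (\<forall>x::'a. countable {..<x})"

definition is_limit :: "'a::wellorder \<Rightarrow> bool" where
  "is_limit x \<longleftrightarrow> (\<exists>y. y < x) \<and> (\<forall>y<x. \<exists>z. y < z \<and> z < x)"

definition ladder_system :: "('a::wellorder \<Rightarrow> nat \<Rightarrow> 'a) \<Rightarrow> bool" where
  "ladder_system s \<longleftrightarrow> (\<forall>\<alpha>. is_limit \<alpha> \<longrightarrow>
      strict_mono (s \<alpha>) \<and> (\<forall>n. \<not> is_limit (s \<alpha> n) \<and> s \<alpha> n < \<alpha>) \<and>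
      (\<forall>\<beta><\<alpha>. \<exists>n. \<beta> < s \<alpha> n))"

(* ladder system topology tau_S: non-limits isolated, limit alpha has basic neighbourhoods
   {alpha} \<union> cofinite part of s_alpha *)
definition ladder_open :: "('a::wellorder \<Rightarrow> nat \<Rightarrow> 'a) \<Rightarrow> 'a set \<Rightarrow> bool" where
  "ladder_open s U \<longleftrightarrow> (\<forall>\<alpha>\<in>U. is_limit \<alpha> \<longrightarrow> finite {n. s \<alpha> n \<notin> U})"

definition ladder_topology :: "('a::wellorder \<Rightarrow> nat \<Rightarrow> 'a) \<Rightarrow> 'a topology" where
  "ladder_topology s = topology (ladder_open s)"

(* K_S = omega_1 \<union> {\<infinity>}, with None playing the role of \<infinity>: one-point compactification *)
definition ladder_space :: "('a::wellorder \<Rightarrow> nat \<Rightarrow> 'a) \<Rightarrow> 'a option topology" where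
  "ladder_space s = topology (\<lambda>U. openin (ladder_topology s) (Some -` U) \<and>
      (None \<in> U \<longrightarrow> compactin (ladder_topology s) (UNIV - Some -` U)))"

definition club :: "'a::wellorder set \<Rightarrow> bool" where
  "club F \<longleftrightarrow> (\<forall>\<beta>. \<exists>\<alpha>\<in>F. \<beta> \<le> \<alpha>) \<and>
     (\<forall>\<alpha>. is_limit \<alpha> \<and> (\<forall>\<beta><\<alpha>. \<exists>\<gamma>\<in>F. \<beta> < \<gamma> \<and> \<gamma> < \<alpha>) \<longrightarrow> \<alpha> \<in> F)"

end

theory Submission
  imports Defs
begin

lemma ladder_open_top: "openin (ladder_topology s) = ladder_open s"
  unfolding ladder_topology_def
proof (rule topology_inverse')
  show "istopology (ladder_open s)"
    unfolding istopology_def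
  proof (intro conjI allI impI)
    fix S T assume S: "ladder_open s S" and T: "ladder_open s T"
    show "ladder_open s (S \<inter> T)"
      unfolding ladder_open_def
    proof (intro ballI impI)
      fix \<alpha> assume "\<alpha> \<in> S \<inter> T" "is_limit \<alpha>"
      then have "finite {n. s \<alpha> n \<notin> S}" "finite {n. s \<alpha> n \<notin> T}"
        using S T unfolding ladder_open_def by auto
      then have "finite ({n. s \<alpha> n \<notin> S} \<union> {n. s \<alpha> n \<notin> T})" by simp
      then show "finite {n. s \<alpha> n \<notin> S \<inter> T}" by (rule finite_subset[rotated]) auto
    qed
  next
    fix K assume K: "\<forall>k\<in>K. ladder_open s k"
    show "ladder_open s (\<Union>K)"
      unfolding ladder_open_def
    proof (intro ballI impI)
      fix \<alpha> assume "\<alpha> \<in> \<Union>K" "is_limit \<alpha>"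
      then obtain k where k: "k \<in> K" "\<alpha> \<in> k" by auto
      then have "finite {n. s \<alpha> n \<notin> k}" using K \<open>is_limit \<alpha>\<close> unfolding ladder_open_def by auto
      then show "finite {n. s \<alpha> n \<notin> \<Union>K}" by (rule finite_subset[rotated]) (use k in auto)
    qed
  qed
qed

lemma topspace_ladder [simp]: "topspace (ladder_topology s) = UNIV"
proof -
  have "openin (ladder_topology s) UNIV" by (simp add: ladder_open_top ladder_open_def)
  then show ?thesis using openin_subset by blast
qed

lemma ladder_space_open:
  "openin (ladder_space s) = (\<lambda>U. ladder_open s (Some -` U) \<and>
      (None \<in> U \<longrightarrow> compactin (ladder_topology s) (UNIV - Some -` U)))"
  unfolding ladder_space_def ladder_open_top[symmetric]
proof (rule topology_inverse')
  let ?L = "ladder_topology s"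
  show "istopology (\<lambda>U. openin ?L (Some -` U) \<and>
      (None \<in> U \<longrightarrow> compactin ?L (UNIV - Some -` U)))"
    unfolding istopology_def
  proof (rule conjI; intro allI impI)
    fix S T assume S: "openin ?L (Some -` S) \<and> (None \<in> S \<longrightarrow> compactin ?L (UNIV - Some -` S))"
      and T: "openin ?L (Some -` T) \<and> (None \<in> T \<longrightarrow> compactin ?L (UNIV - Some -` T))"
    have e1: "Some -` (S \<inter> T) = Some -` S \<inter> Some -` T" by auto
    have e2: "UNIV - (Some -` S \<inter> Some -` T) = (UNIV - Some -` S) \<union> (UNIV - Some -` T)" by auto
    show "openin ?L (Some -` (S \<inter> T)) \<and>
      (None \<in> S \<inter> T \<longrightarrow> compactin ?L (UNIV - Some -` (S \<inter> T)))"
    proof (intro conjI impI)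
      show "openin ?L (Some -` (S \<inter> T))" unfolding e1 using S T by (intro openin_Int) auto
      assume "None \<in> S \<inter> T"
      then have "compactin ?L (UNIV - Some -` S)" "compactin ?L (UNIV - Some -` T)" using S T by auto
      then show "compactin ?L (UNIV - Some -` (S \<inter> T))" unfolding e1 e2 by (rule compactin_Un)
    qed
  next
    fix K assume K: "\<forall>k\<in>K. openin ?L (Some -` k) \<and> (None \<in> k \<longrightarrow> compactin ?L (UNIV - Some -` k))"
    have e1: "Some -` (\<Union>K) = \<Union>((\<lambda>k. Some -` k) ` K)" by auto
    have o: "openin ?L (Some -` (\<Union>K))" unfolding e1 using K by (intro openin_Union) auto
    show "openin ?L (Some -` \<Union>K) \<and> (None \<in> \<Union>K \<longrightarrow> compactin ?L (UNIV - Some -` \<Union>K))"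
    proof (intro conjI impI o)
      assume "None \<in> \<Union>K"
      then obtain k where k: "k \<in> K" "None \<in> k" by auto
      then have c: "compactin ?L (UNIV - Some -` k)" using K by auto
      have "closedin ?L (UNIV - Some -` \<Union>K)" using o by (simp add: closedin_def double_diff)
      moreover have "UNIV - Some -` \<Union>K \<subseteq> UNIV - Some -` k" using k by auto
      ultimately show "compactin ?L (UNIV - Some -` \<Union>K)"
        using closed_compactin[OF c] by blast
    qed
  qed
qed

lemma omega1_bound:
  assumes "is_omega1_type TYPE('a::wellorder)" "countable (X::'a set)"
  shows "\<exists>z. \<forall>x\<in>X. x < z"
proof -
  have c: "countable {..x}" for x :: 'a
  proof -
    have "{..x} = insert x {..<x}" by auto
    then show ?thesis using assms(1) by (simp add: is_omega1_type_def)
  qed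
  have "countable (\<Union>x\<in>X. {..x})" using assms(2) c by blast
  moreover have "uncountable (UNIV::'a set)" using assms(1) by (simp add: is_omega1_type_def)
  ultimately obtain z where "z \<notin> (\<Union>x\<in>X. {..x})" by (metis UNIV_eq_I)
  then show ?thesis by (auto simp: not_le)
qed

lemma compact_countable:
  assumes "is_omega1_type TYPE('a::wellorder)" "ladder_system s"
    "compactin (ladder_topology (s::'a \<Rightarrow> nat \<Rightarrow> 'a)) C"
  shows "countable C"
proof -
  have "ladder_open s {..<x}" for x
    unfolding ladder_open_def
  proof (intro ballI impI)
    fix \<alpha> assume "\<alpha> \<in> {..<x}" "is_limit \<alpha>"
    then have h: "\<alpha> < x" "\<forall>n. s \<alpha> n < \<alpha>" using assms(2) unfolding ladder_system_def by auto
    have "s \<alpha> n < x" for n using h order.strict_trans by blast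
    then have "{n. s \<alpha> n \<notin> {..<x}} = {}" by simp
    then show "finite {n. s \<alpha> n \<notin> {..<x}}" by simp
  qed
  then have "\<forall>U\<in>range lessThan. openin (ladder_topology s) U"
    by (auto simp: ladder_open_top)
  moreover have "C \<subseteq> \<Union>(range lessThan)" 
  proof
    fix x assume "x \<in> C"
    obtain z where "\<forall>y\<in>{x}. y < z" using omega1_bound[OF assms(1), of "{x}"] by auto
    then show "x \<in> \<Union>(range lessThan)" by auto
  qed
  ultimately have "\<exists>F. finite F \<and> F \<subseteq> range lessThan \<and> C \<subseteq> \<Union>F"
    using assms(3) unfolding compactin_def by blast
  then obtain F where F: "finite F" "F \<subseteq> range lessThan" "C \<subseteq> \<Union>F" by blast
  have "countable (\<Union>F)"
  proof -
    have "\<forall>U\<in>F. countable U" using F(2) assms(1) by (auto simp: is_omega1_type_def)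
    moreover have "countable F" using F(1) by (rule countable_finite)
    ultimately have "countable (\<Union>U\<in>F. U)" using countable_UN[of F "\<lambda>U. U"] by blast
    then show ?thesis by simp
  qed
  then show ?thesis using F(3) countable_subset by blast
qed

context
  fixes s :: "'a::wellorder \<Rightarrow> nat \<Rightarrow> 'a" and \<phi> :: "'a option \<Rightarrow> 'a option"
  assumes om: "is_omega1_type TYPE('a)"
    and ls: "ladder_system s"
    and cm: "continuous_map (ladder_space s) (ladder_space s) \<phi>"
    and pn: "\<phi> None = None"
begin

lemma topK: "topspace (ladder_space s) = UNIV"
proof -
  have "openin (ladder_space s) UNIV" by (simp add: ladder_space_open ladder_open_def)
  then show ?thesis using openin_subset by blast
qed

lemma pre:
  assumes "openin (ladder_space s) U"
  shows "ladder_open s {x. \<phi> (Some x) \<in> U} \<and>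
     (None \<in> U \<longrightarrow> compactin (ladder_topology s) {x. \<phi> (Some x) \<notin> U})"
proof -
  have "openin (ladder_space s) {p. \<phi> p \<in> U}"
    using openin_continuous_map_preimage[OF cm assms] topK by simp
  moreover have "Some -` {p. \<phi> p \<in> U} = {x. \<phi> (Some x) \<in> U}" by auto
  moreover have "UNIV - Some -` {p. \<phi> p \<in> U} = {x. \<phi> (Some x) \<notin> U}" by auto
  ultimately show ?thesis using pn by (simp add: ladder_space_open)
qed

lemma nbhd:
  assumes "openin (ladder_space s) U" "\<phi> (Some \<alpha>) \<in> U" "is_limit \<alpha>"
  shows "finite {n. \<phi> (Some (s \<alpha> n)) \<notin> U}"
  using pre[OF assms(1)] assms(2,3) unfolding ladder_open_def by auto

lemma open_le: "openin (ladder_space s) (Some ` {..\<gamma>})"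
proof -
  have "Some -` (Some ` {..\<gamma>}) = {..\<gamma>}" by auto
  moreover have "ladder_open s {..\<gamma>}"
    unfolding ladder_open_def
  proof (intro ballI impI)
    fix \<alpha> assume "\<alpha> \<in> {..\<gamma>}" "is_limit \<alpha>"
    then have "{n. s \<alpha> n \<notin> {..\<gamma>}} = {}"
      using ls unfolding ladder_system_def by (auto dest: less_le_trans intro: order.strict_implies_order)
    then show "finite {n. s \<alpha> n \<notin> {..\<gamma>}}" by simp
  qed
  ultimately show ?thesis by (simp add: ladder_space_open)
qed

lemma open_gt: "openin (ladder_space s) (Some ` {\<gamma><..})"
proof -
  have "Some -` (Some ` {\<gamma><..}) = {\<gamma><..}" by auto
  moreover have "ladder_open s {\<gamma><..}"
    unfolding ladder_open_def
  proof (intro ballI impI)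
    fix \<alpha> assume a: "\<alpha> \<in> {\<gamma><..}" "is_limit \<alpha>"
    have sm: "strict_mono (s \<alpha>)" and "\<forall>\<beta><\<alpha>. \<exists>n. \<beta> < s \<alpha> n"
      using ls a(2) unfolding ladder_system_def by auto
    then obtain m where m: "\<gamma> < s \<alpha> m" using a(1) by auto
    have "{n. s \<alpha> n \<notin> {\<gamma><..}} \<subseteq> {..<m}"
    proof
      fix n assume "n \<in> {n. s \<alpha> n \<notin> {\<gamma><..}}"
      then have "\<not> \<gamma> < s \<alpha> n" by auto
      moreover have "m \<le> n \<Longrightarrow> s \<alpha> m \<le> s \<alpha> n"
        using sm by (simp add: strict_mono_less_eq)
      ultimately show "n \<in> {..<m}" using m by (auto simp: not_le dest: less_le_trans)
    qed
    then show "finite {n. s \<alpha> n \<notin> {\<gamma><..}}" using finite_subset by blast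
  qed
  ultimately show ?thesis by (simp add: ladder_space_open)
qed

lemma open_ne: "openin (ladder_space s) (UNIV - {Some \<delta>})"
proof -
  have "Some -` (UNIV - {Some \<delta>}) = UNIV - {\<delta>}" by auto
  moreover have "ladder_open s (UNIV - {\<delta>})"
    unfolding ladder_open_def
  proof (intro ballI impI)
    fix \<alpha> assume "\<alpha> \<in> UNIV - {\<delta>}" and a: "is_limit \<alpha>"
    then have sm: "strict_mono (s \<alpha>)" using ls unfolding ladder_system_def by auto
    have "finite (s \<alpha> -` {\<delta>})"
      by (rule finite_vimageI) (use sm strict_mono_imp_inj_on in auto)
    moreover have "{n. s \<alpha> n \<notin> UNIV - {\<delta>}} = s \<alpha> -` {\<delta>}" by auto
    ultimately show "finite {n. s \<alpha> n \<notin> UNIV - {\<delta>}}" by simp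
  qed
  ultimately show ?thesis by (simp add: ladder_space_open double_diff)
qed

lemma fiber_countable: "countable {x. \<phi> (Some x) = Some \<delta>}"
proof -
  have c: "compactin (ladder_topology s) {x. \<phi> (Some x) \<notin> UNIV - {Some \<delta>}}"
    using pre[OF open_ne] pn by simp
  have eq: "{x. \<phi> (Some x) \<notin> UNIV - {Some \<delta>}} = {x. \<phi> (Some x) = Some \<delta>}" by blast
  from c have "compactin (ladder_topology s) {x. \<phi> (Some x) = Some \<delta>}" unfolding eq .
  then show ?thesis by (rule compact_countable[OF om ls])
qed

definition XX :: "'a \<Rightarrow> 'a set" where
  "XX \<beta> = {x. \<exists>\<delta>\<le>\<beta>. \<phi> (Some x) = Some \<delta>} \<union> {y. \<exists>x\<le>\<beta>. \<phi> (Some x) = Some y}"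

lemma XX_mono: assumes "\<beta> \<le> \<beta>'" shows "XX \<beta> \<subseteq> XX \<beta>'"
  unfolding XX_def using order_trans[OF _ assms] by auto

lemma XX_countable: "countable (XX \<beta>)"
proof -
  have cle: "countable {..\<beta>}"
  proof -
    have "{..\<beta>} = insert \<beta> {..<\<beta>}" by auto
    then show ?thesis using om by (simp add: is_omega1_type_def)
  qed
  have "{x. \<exists>\<delta>\<le>\<beta>. \<phi> (Some x) = Some \<delta>} = (\<Union>\<delta>\<in>{..\<beta>}. {x. \<phi> (Some x) = Some \<delta>})" by auto
  moreover have "countable (\<Union>\<delta>\<in>{..\<beta>}. {x. \<phi> (Some x) = Some \<delta>})"
    by (rule countable_UN[OF cle fiber_countable])
  moreover have "{y. \<exists>x\<le>\<beta>. \<phi> (Some x) = Some y} \<subseteq> (\<lambda>x. the (\<phi> (Some x))) ` {..\<beta>}"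
  proof
    fix y assume "y \<in> {y. \<exists>x\<le>\<beta>. \<phi> (Some x) = Some y}"
    then obtain x where "x \<le> \<beta>" "\<phi> (Some x) = Some y" by auto
    then show "y \<in> (\<lambda>x. the (\<phi> (Some x))) ` {..\<beta>}" by (metis atMost_iff image_eqI option.sel)
  qed
  moreover have "countable ((\<lambda>x. the (\<phi> (Some x))) ` {..\<beta>})" using cle by simp
  ultimately show ?thesis unfolding XX_def
    by (intro countable_Un) (simp, rule countable_subset)
qed

definition FF :: "'a set" where
  "FF = {\<alpha>. is_limit \<alpha> \<and> (\<forall>\<beta><\<alpha>. \<exists>z<\<alpha>. \<forall>x\<in>XX \<beta>. x < z)}"

lemma FF_unbounded: "\<exists>\<alpha>\<in>FF. \<beta> \<le> \<alpha>"
proof -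
  have "\<forall>x. \<exists>z. \<forall>y\<in>insert x (XX x). y < z"
  proof
    fix x show "\<exists>z. \<forall>y\<in>insert x (XX x). y < z"
      using omega1_bound[OF om, of "insert x (XX x)"] XX_countable[of x] by simp
  qed
  then have "\<exists>T. \<forall>x. \<forall>y\<in>insert x (XX x). y < T x" by (rule choice)
  then obtain T where T: "\<And>x. \<forall>y\<in>insert x (XX x). y < T x" by blast
  define a where "a n = (T ^^ n) \<beta>" for n
  have aS: "a (Suc n) = T (a n)" for n by (simp add: a_def)
  obtain b where "\<forall>x\<in>range a. x < b" using omega1_bound[OF om, of "range a"] by auto
  then have ex: "\<exists>z. \<forall>n. a n < z" by auto
  define \<alpha> where "\<alpha> = (LEAST z. \<forall>n. a n < z)"
  have below: "\<forall>n. a n < \<alpha>" unfolding \<alpha>_def by (rule LeastI_ex[OF ex])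
  have cof: "\<exists>n. y \<le> a n" if "y < \<alpha>" for y
  proof -
    have "\<not> (\<forall>n. a n < y)" using not_less_Least[OF that[unfolded \<alpha>_def]] by blast
    then show ?thesis by (auto simp: not_less)
  qed
  have lim: "is_limit \<alpha>"
    unfolding is_limit_def
  proof (intro conjI allI impI)
    show "\<exists>y. y < \<alpha>" using below by blast
    fix y assume "y < \<alpha>"
    then obtain n where "y \<le> a n" using cof by blast
    moreover have "a n < a (Suc n)" using T[of "a n"] aS by auto
    ultimately show "\<exists>z>y. z < \<alpha>" using below by (meson le_less_trans)
  qed
  have "\<alpha> \<in> FF"
    unfolding FF_def
  proof (intro CollectI conjI lim allI impI)
    fix \<beta>' assume "\<beta>' < \<alpha>"
    then obtain n where n: "\<beta>' \<le> a n" using cof by blast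
    show "\<exists>z<\<alpha>. \<forall>x\<in>XX \<beta>'. x < z"
    proof (intro exI conjI ballI)
      show "a (Suc n) < \<alpha>" using below by blast
      fix x assume "x \<in> XX \<beta>'"
      then have "x \<in> XX (a n)" using XX_mono[OF n] by blast
      then show "x < a (Suc n)" using T[of "a n"] aS by auto
    qed
  qed
  moreover have "\<beta> \<le> \<alpha>" using below[rule_format, of 0] by (simp add: a_def)
  ultimately show ?thesis by blast
qed

lemma FF_club: "club FF"
  unfolding club_def
proof (intro conjI allI impI)
  show "\<exists>\<alpha>\<in>FF. \<beta> \<le> \<alpha>" for \<beta> by (rule FF_unbounded)
  fix \<alpha> assume a: "is_limit \<alpha> \<and> (\<forall>\<beta><\<alpha>. \<exists>\<gamma>\<in>FF. \<beta> < \<gamma> \<and> \<gamma> < \<alpha>)"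
  show "\<alpha> \<in> FF"
    unfolding FF_def
  proof (intro CollectI conjI allI impI)
    show "is_limit \<alpha>" using a by blast
    fix \<beta> assume "\<beta> < \<alpha>"
    then obtain \<gamma> where g: "\<gamma> \<in> FF" "\<beta> < \<gamma>" "\<gamma> < \<alpha>" using a by blast
    then obtain z where "z < \<gamma>" "\<forall>x\<in>XX \<beta>. x < z" unfolding FF_def by blast
    then show "\<exists>z<\<alpha>. \<forall>x\<in>XX \<beta>. x < z" using g(3) by (meson less_trans)
  qed
qed

lemma FF_good:
  assumes "\<alpha> \<in> FF"
  shows "\<phi> (Some \<alpha>) = Some \<alpha> \<or> \<phi> (Some \<alpha>) = None"
proof (rule ccontr)
  assume "\<not> ?thesis"
  then obtain \<gamma> where g: "\<phi> (Some \<alpha>) = Some \<gamma>" "\<gamma> \<noteq> \<alpha>" by (cases "\<phi> (Some \<alpha>)") auto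
  have lim: "is_limit \<alpha>" using assms by (simp add: FF_def)
  have FFa: "\<forall>\<beta><\<alpha>. \<exists>z<\<alpha>. \<forall>x\<in>XX \<beta>. x < z" using assms by (simp add: FF_def)
  have lsa: "strict_mono (s \<alpha>) \<and> (\<forall>n. \<not> is_limit (s \<alpha> n) \<and> s \<alpha> n < \<alpha>) \<and> (\<forall>\<beta><\<alpha>. \<exists>n. \<beta> < s \<alpha> n)"
    using ls lim unfolding ladder_system_def by blast
  then have sm: "strict_mono (s \<alpha>)" and sb: "\<And>n. s \<alpha> n < \<alpha>" and sc: "\<And>\<beta>. \<beta> < \<alpha> \<Longrightarrow> \<exists>n. \<beta> < s \<alpha> n"
    by auto
  show False
  proof (cases "\<gamma> < \<alpha>")
    case True
    obtain z where z: "z < \<alpha>" "\<forall>x\<in>XX \<gamma>. x < z" using FFa True by blast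
    have "\<phi> (Some \<alpha>) \<in> Some ` {..\<gamma>}" using g by simp
    then have fin: "finite {n. \<phi> (Some (s \<alpha> n)) \<notin> Some ` {..\<gamma>}}"
      by (rule nbhd[OF open_le _ lim])
    obtain m where m: "z < s \<alpha> m" using sc[OF z(1)] by blast
    have sub: "{m..} \<subseteq> {n. \<phi> (Some (s \<alpha> n)) \<notin> Some ` {..\<gamma>}}"
    proof
      fix n assume "n \<in> {m..}"
      then have "s \<alpha> m \<le> s \<alpha> n" using sm by (simp add: strict_mono_less_eq)
      then have "z < s \<alpha> n" by (rule less_le_trans[OF m])
      then have nx: "s \<alpha> n \<notin> XX \<gamma>" using z(2) by auto
      show "n \<in> {n. \<phi> (Some (s \<alpha> n)) \<notin> Some ` {..\<gamma>}}"
      proof (rule CollectI, rule notI)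
        assume "\<phi> (Some (s \<alpha> n)) \<in> Some ` {..\<gamma>}"
        then obtain \<delta> where "\<delta> \<le> \<gamma>" "\<phi> (Some (s \<alpha> n)) = Some \<delta>" by auto
        then have "s \<alpha> n \<in> XX \<gamma>" unfolding XX_def by blast
        then show False using nx by contradiction
      qed
    qed
    have "finite {m..}" by (rule finite_subset[OF sub fin])
    then show False by (simp add: infinite_Ici)
  next
    case False
    then have ga: "\<alpha> < \<gamma>" using g(2) by auto
    have "\<phi> (Some \<alpha>) \<in> Some ` {\<alpha><..}" using g ga by simp
    then have fin: "finite {n. \<phi> (Some (s \<alpha> n)) \<notin> Some ` {\<alpha><..}}"
      by (rule nbhd[OF open_gt _ lim])
    have sub: "UNIV \<subseteq> {n. \<phi> (Some (s \<alpha> n)) \<notin> Some ` {\<alpha><..}}"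
    proof
      fix n :: nat
      obtain z where z: "z < \<alpha>" "\<forall>x\<in>XX (s \<alpha> n). x < z" using FFa sb[of n] by blast
      have "\<phi> (Some (s \<alpha> n)) \<notin> Some ` {\<alpha><..}"
      proof
        assume "\<phi> (Some (s \<alpha> n)) \<in> Some ` {\<alpha><..}"
        then obtain y where y: "\<phi> (Some (s \<alpha> n)) = Some y" "\<alpha> < y" by auto
        then have "y \<in> XX (s \<alpha> n)" unfolding XX_def by blast
        then have "y < z" using z(2) by blast
        then have "y < \<alpha>" using z(1) by (rule less_trans)
        then show False using y(2) by simp
      qed
      then show "n \<in> {n. \<phi> (Some (s \<alpha> n)) \<notin> Some ` {\<alpha><..}}" by simp
    qed
    have "finite (UNIV :: nat set)" by (rule finite_subset[OF sub fin])
    then show False by simp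
  qed
qed

end

theorem proposition1:
  fixes s :: "'a::wellorder \<Rightarrow> nat \<Rightarrow> 'a" and \<phi> :: "'a option \<Rightarrow> 'a option"
  assumes "is_omega1_type TYPE('a)"
    and "ladder_system s"
    and "continuous_map (ladder_space s) (ladder_space s) \<phi>"
    and "\<phi> None = None"
  shows "\<exists>F. club F \<and> (\<forall>\<alpha>\<in>F. \<phi> (Some \<alpha>) = Some \<alpha> \<or> \<phi> (Some \<alpha>) = None)"
proof (intro exI conjI ballI)
  show "club (FF \<phi>)" by (rule FF_club[OF assms])
  fix \<alpha> assume "\<alpha> \<in> FF \<phi>"
  then show "\<phi> (Some \<alpha>) = Some \<alpha> \<or> \<phi> (Some \<alpha>) = None" by (rule FF_good[OF assms])
qed

end
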